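(* Let $R$ be a unital commutative Hausdorff topological ring with dense group of units, $E\in\mathrm{TopSMod}_R$, $\lambda\in\Lambda^\infty$ and $U\subset\underline E(\lambda)$ a subset. There exists an open subfunctor $\mathcal U\subset\underline E$ (of functors $\Lambda^\infty\to\mathrm{Top}$) with $\mathcal U(\lambda)=U$ if and only if $U$ is open in the DeWitt topology. Such a functor is unique, and it is given by $\mathcal U=\underline E_{U_R}$ where $U_R=\underline E(\varepsilon)(U)=\mathcal U(R)$.
   Context: $\lambda^n=R[\theta_1,\dots,\theta_n]$ and $\lambda^\infty=R[\theta_i:i\in\mathbb N]$ are Grassmann algebras on odd generators ($\lambda^n=\bigoplus_I R\theta_I$ with product topology, $\lambda^\infty$ with direct limit topology); $\Lambda^\infty$ is the category with objects the $\lambda^n$ ($n\in\mathbb N$, $\lambda^0=R$) and $\lambda^\infty$, morphisms the even unital $R$-algebra morphisms; $\varepsilon:\lambda\to R$ kills all $\theta_i$. $\mathrm{TopSMod}_R$: Hausdorff graded topological $R$-modules $E=E_0\oplus E_1$. $E\otimes\lambda^N=\prod_{|I|\le N}E\theta_I$ (product topology), $E\otimes\lambda^\infty=\varinjlim_N E\otimes\lambda^N$ in Top; $\underline E(\lambda)=(E\otimes\lambda)_0=E_0\otimes\lambda_0\oplus E_1\otimes\lambda_1$ with the subspace topology, and $\underline E(\varphi)=(\mathrm{id}\otimes\varphi)|_{\underline E(\lambda)}$, giving a functor $\underline E:\Lambda^\infty\to\mathrm{Top}$. A subfunctor $\mathcal U\subset\underline E$ satisfies $\mathcal U(\mu)\subset\underline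 E(\mu)$ for all $\mu$, with $\underline E(\varphi)$ mapping $\mathcal U(\mu)$ into $\mathcal U(\mu')$ and $\mathcal U(\varphi)$ the restriction; it is open if each $\mathcal U(\mu)$ is open in $\underline E(\mu)$. For open $V\subset E_0$, $\underline E_V$ is the subfunctor $\underline E_V(\mu)=\underline E(\varepsilon)^{-1}(V)$. The DeWitt topology on $\underline E(\lambda)$ is the coarsest topology making $\underline E(\varepsilon):\underline E(\lambda)\to E_0$ continuous. *)

theory Defs
  imports "HOL-Analysis.Analysis"
begin

text \<open>Fin n stands for the Grassmann algebra lambda^n (generators theta_0,...,theta_(n-1)),
  Fin 0 is R itself, and Inf stands for lambda^infinity (generators theta_i, i a natural number).\<close>

datatype gobj = Fin nat | Inf

fun idx_ok :: "gobj \<Rightarrow> nat set \<Rightarrow> bool" where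
  "idx_ok (Fin n) I = (I \<subseteq> {..<n})"
| "idx_ok Inf I = finite I"

section \<open>Grassmann algebras: elements are coefficient functions I \<mapsto> coefficient of theta_I\<close>

definition grass :: "gobj \<Rightarrow> (nat set \<Rightarrow> 'r::comm_ring_1) set" where
  "grass mu = {g. (\<forall>I. g I \<noteq> 0 \<longrightarrow> idx_ok mu I) \<and> finite {I. g I \<noteq> 0}}"

text \<open>theta_I theta_J = (-1)^(number of pairs i in I, j in J with j < i) theta_(I union J) for disjoint I, J.\<close>
definition gsign :: "nat set \<Rightarrow> nat set \<Rightarrow> 'r::comm_ring_1" where
  "gsign I J = (-1) ^ card {(i, j). i \<in> I \<and> j \<in> J \<and> j < i}"

definition gmul :: "(nat set \<Rightarrow> 'r::comm_ring_1) \<Rightarrow> (nat set \<Rightarrow> 'r) \<Rightarrow> nat set \<Rightarrow> 'r" where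
  "gmul g h K = (if finite K then (\<Sum>I\<in>Pow K. gsign I (K - I) * g I * h (K - I)) else 0)"

definition gone :: "nat set \<Rightarrow> 'r::comm_ring_1" where
  "gone = (\<lambda>I. if I = {} then 1 else 0)"

definition theta :: "nat set \<Rightarrow> nat set \<Rightarrow> 'r::comm_ring_1" where
  "theta I = (\<lambda>K. if K = I then 1 else 0)"

definition is_even :: "(nat set \<Rightarrow> 'a::zero) \<Rightarrow> bool" where
  "is_even g \<longleftrightarrow> (\<forall>I. odd (card I) \<longrightarrow> g I = 0)"

definition is_odd :: "(nat set \<Rightarrow> 'a::zero) \<Rightarrow> bool" where
  "is_odd g \<longleftrightarrow> (\<forall>I. even (card I) \<longrightarrow> g I = 0)"

definition gmorph :: "gobj \<Rightarrow> gobj \<Rightarrow> ((nat set \<Rightarrow> 'r::comm_ring_1) \<Rightarrow> (nat set \<Rightarrow> 'r)) \<Rightarrow> bool" where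
  "gmorph mu mu' phi \<longleftrightarrow>
     (\<forall>g\<in>grass mu. phi g \<in> grass mu') \<and>
     (\<forall>g\<in>grass mu. \<forall>h\<in>grass mu. phi (\<lambda>I. g I + h I) = (\<lambda>I. phi g I + phi h I)) \<and>
     (\<forall>c. \<forall>g\<in>grass mu. phi (\<lambda>I. c * g I) = (\<lambda>I. c * phi g I)) \<and>
     (\<forall>g\<in>grass mu. \<forall>h\<in>grass mu. phi (gmul g h) = gmul (phi g) (phi h)) \<and>
     phi gone = gone \<and>
     (\<forall>g\<in>grass mu. is_even g \<longrightarrow> is_even (phi g)) \<and>
     (\<forall>g\<in>grass mu. is_odd g \<longrightarrow> is_odd (phi g))"

definition geps :: "(nat set \<Rightarrow> 'r::comm_ring_1) \<Rightarrow> nat set \<Rightarrow> 'r" where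
  "geps g = (\<lambda>K. if K = {} then g {} else 0)"

definition top_ring_dense_units :: "'r::{comm_ring_1, topological_semigroup_mult, topological_group_add, t2_space} itself \<Rightarrow> bool" where
  "top_ring_dense_units _ \<longleftrightarrow> closure {u::'r. \<exists>v. u * v = 1} = UNIV"

definition topsmod ::
  "('r::{comm_ring_1, topological_semigroup_mult, topological_group_add, t2_space} \<Rightarrow> 'e::{ab_group_add, topological_group_add, t2_space} \<Rightarrow> 'e)
   \<Rightarrow> 'e set \<Rightarrow> 'e set \<Rightarrow> bool" where
  "topsmod sm E0 E1 \<longleftrightarrow>
     (\<forall>a b x. sm (a + b) x = sm a x + sm b x) \<and>
     (\<forall>a x y. sm a (x + y) = sm a x + sm a y) \<and>
     (\<forall>a b x. sm (a * b) x = sm a (sm b x)) \<and>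
     (\<forall>x. sm 1 x = x) \<and>
     continuous_on UNIV (\<lambda>p. sm (fst p) (snd p)) \<and>
     (0 \<in> E0 \<and> (\<forall>x\<in>E0. \<forall>y\<in>E0. x + y \<in> E0) \<and> (\<forall>a. \<forall>x\<in>E0. sm a x \<in> E0)) \<and>
     (0 \<in> E1 \<and> (\<forall>x\<in>E1. \<forall>y\<in>E1. x + y \<in> E1) \<and> (\<forall>a. \<forall>x\<in>E1. sm a x \<in> E1)) \<and>
     E0 \<inter> E1 = {0} \<and> (\<forall>x. \<exists>a\<in>E0. \<exists>b\<in>E1. x = a + b)"

text \<open>Underlying set of E tensor lambda (coefficient functions I \<mapsto> e_I).\<close>
definition tens_set :: "gobj \<Rightarrow> (nat set \<Rightarrow> 'e::zero) set" where
  "tens_set mu = {f. (\<forall>I. f I \<noteq> 0 \<longrightarrow> idx_ok mu I) \<and> finite {I. f I \<noteq> 0}}"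

text \<open>E tensor lambda^N = product over I subset {0..N-1} of E theta_I, product topology
  (the other coordinates are forced to be 0).\<close>
definition ptop :: "nat \<Rightarrow> (nat set \<Rightarrow> 'e::{zero,topological_space}) topology" where
  "ptop N = product_topology (\<lambda>I. if I \<subseteq> {..<N} then euclidean else top_of_set {0}) UNIV"

text \<open>E tensor lambda^infinity: direct limit in Top of the E tensor lambda^N.\<close>
definition tens_top :: "gobj \<Rightarrow> (nat set \<Rightarrow> 'e::{zero,topological_space}) topology" where
  "tens_top mu = (case mu of Fin n \<Rightarrow> ptop n
     | Inf \<Rightarrow> topology (\<lambda>U. U \<subseteq> tens_set Inf \<and>
                 (\<forall>N. openin (ptop N) (U \<inter> topspace (ptop N)))))"

text \<open>underline E(lambda) = even part of E tensor lambda.\<close>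
definition Eset :: "'e set \<Rightarrow> 'e set \<Rightarrow> gobj \<Rightarrow> (nat set \<Rightarrow> 'e::zero) set" where
  "Eset E0 E1 mu = {f \<in> tens_set mu. \<forall>I. f I \<in> (if even (card I) then E0 else E1)}"

definition Etop :: "'e set \<Rightarrow> 'e set \<Rightarrow> gobj \<Rightarrow> (nat set \<Rightarrow> 'e::{zero,topological_space}) topology" where
  "Etop E0 E1 mu = subtopology (tens_top mu) (Eset E0 E1 mu)"

text \<open>underline E(phi) = id tensor phi.\<close>
definition Emap :: "('r::comm_ring_1 \<Rightarrow> 'e::comm_monoid_add \<Rightarrow> 'e)
    \<Rightarrow> ((nat set \<Rightarrow> 'r) \<Rightarrow> (nat set \<Rightarrow> 'r)) \<Rightarrow> (nat set \<Rightarrow> 'e) \<Rightarrow> nat set \<Rightarrow> 'e" where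
  "Emap sm phi f = (\<lambda>J. \<Sum>I\<in>{I. f I \<noteq> 0}. sm (phi (theta I) J) (f I))"

definition subfunctor :: "('r::comm_ring_1 \<Rightarrow> 'e::comm_monoid_add \<Rightarrow> 'e) \<Rightarrow> 'e set \<Rightarrow> 'e set
    \<Rightarrow> (gobj \<Rightarrow> (nat set \<Rightarrow> 'e) set) \<Rightarrow> bool" where
  "subfunctor sm E0 E1 UU \<longleftrightarrow>
     (\<forall>mu. UU mu \<subseteq> Eset E0 E1 mu) \<and>
     (\<forall>mu mu' phi. gmorph mu mu' phi \<longrightarrow> Emap sm phi ` UU mu \<subseteq> UU mu')"

definition open_subfunctor :: "('r::comm_ring_1 \<Rightarrow> 'e::{comm_monoid_add,topological_space} \<Rightarrow> 'e)
    \<Rightarrow> 'e set \<Rightarrow> 'e set \<Rightarrow> (gobj \<Rightarrow> (nat set \<Rightarrow> 'e) set) \<Rightarrow> bool" where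
  "open_subfunctor sm E0 E1 UU \<longleftrightarrow>
     subfunctor sm E0 E1 UU \<and> (\<forall>mu. openin (Etop E0 E1 mu) (UU mu))"

definition EV :: "('r::comm_ring_1 \<Rightarrow> 'e::comm_monoid_add \<Rightarrow> 'e) \<Rightarrow> 'e set \<Rightarrow> 'e set
    \<Rightarrow> (nat set \<Rightarrow> 'e) set \<Rightarrow> gobj \<Rightarrow> (nat set \<Rightarrow> 'e) set" where
  "EV sm E0 E1 V mu = {x \<in> Eset E0 E1 mu. Emap sm geps x \<in> V}"

definition dewitt :: "('r::comm_ring_1 \<Rightarrow> 'e::{comm_monoid_add,topological_space} \<Rightarrow> 'e) \<Rightarrow> 'e set \<Rightarrow> 'e set
    \<Rightarrow> gobj \<Rightarrow> (nat set \<Rightarrow> 'e) topology" where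
  "dewitt sm E0 E1 lam = pullback_topology (Eset E0 E1 lam) (Emap sm geps) (Etop E0 E1 (Fin 0))"

end

theory Submission
  imports Defs
begin
lemma topsmod_add: "topsmod sm E0 E1 \<Longrightarrow> sm (a + b) x = sm a x + sm b x" unfolding topsmod_def by simp
lemma topsmod_add2: "topsmod sm E0 E1 \<Longrightarrow> sm a (x + y) = sm a x + sm a y" unfolding topsmod_def by simp
lemma topsmod_mult: "topsmod sm E0 E1 \<Longrightarrow> sm (a * b) x = sm a (sm b x)" unfolding topsmod_def by simp
lemma topsmod_one: "topsmod sm E0 E1 \<Longrightarrow> sm 1 x = x" unfolding topsmod_def by simp
lemma topsmod_cont: "topsmod sm E0 E1 \<Longrightarrow> continuous_on UNIV (\<lambda>p. sm (fst p) (snd p))" unfolding topsmod_def by simp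
lemma topsmod_E0: "topsmod sm E0 E1 \<Longrightarrow> 0 \<in> E0 \<and> (\<forall>x\<in>E0. \<forall>y\<in>E0. x + y \<in> E0) \<and> (\<forall>a. \<forall>x\<in>E0. sm a x \<in> E0)" unfolding topsmod_def by simp
lemma topsmod_E1: "topsmod sm E0 E1 \<Longrightarrow> 0 \<in> E1 \<and> (\<forall>x\<in>E1. \<forall>y\<in>E1. x + y \<in> E1) \<and> (\<forall>a. \<forall>x\<in>E1. sm a x \<in> E1)" unfolding topsmod_def by simp

lemma sm_zero_left: assumes "topsmod sm E0 E1" shows "sm 0 x = 0"
proof -
  have "sm (0+0) x = sm 0 x + sm 0 x" using assms by (rule topsmod_add)
  thus ?thesis by simp
qed

lemma sm_zero_right: assumes "topsmod sm E0 E1" shows "sm a 0 = 0"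
proof -
  have "sm a (0+0) = sm a 0 + sm a 0" using assms by (rule topsmod_add2)
  thus ?thesis by simp
qed

lemma sm_one: assumes "topsmod sm E0 E1" shows "sm 1 x = x"
  using assms by (rule topsmod_one)

lemma sum_delta_supp:
  assumes "finite {I. x I \<noteq> 0}"
  shows "(\<Sum>I\<in>{I. x I \<noteq> 0}. if I = J then x I else 0) = x J"
  using assms by (simp add: sum.delta')

lemma sum_closed:
  assumes "0 \<in> E" "\<forall>x\<in>E. \<forall>y\<in>E. x + y \<in> E" "\<forall>i\<in>S. f i \<in> E"
  shows "sum f S \<in> E"
proof (cases "finite S")
  case True
  then show ?thesis using assms(3)
    by (induction S rule: finite_induct) (auto simp: assms(1,2))
qed (simp add: assms(1))

lemma Emap_geps:
  assumes "topsmod sm E0 E1" "finite {I. x I \<noteq> 0}"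
  shows "Emap sm geps x = (\<lambda>J. if J = {} then x {} else 0)"
proof
  fix J
  have "Emap sm geps x J = (\<Sum>I\<in>{I. x I \<noteq> 0}. if I = {} then (if J = {} then x I else 0) else 0)"
    unfolding Emap_def
    by (rule sum.cong) (auto simp: geps_def theta_def sm_zero_left[OF assms(1)] sm_one[OF assms(1)])
  also have "\<dots> = (if J = {} then x {} else 0)"
  proof (cases "J = {}")
    case True
    then show ?thesis using sum_delta_supp[OF assms(2), of "{}"] by (simp only: True if_True)
  next
    case False
    hence F: "(J = {}) = False" by simp
    show ?thesis by (simp only: F if_False) simp
  qed
  finally show "Emap sm geps x J = (if J = {} then x {} else 0)" .
qed

lemma Emap_id:
  assumes "topsmod sm E0 E1" "finite {I. x I \<noteq> 0}"
  shows "Emap sm id x = x"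
proof
  fix J
  have "Emap sm id x J = (\<Sum>I\<in>{I. x I \<noteq> 0}. if I = J then x I else 0)"
    unfolding Emap_def
    by (rule sum.cong) (auto simp: theta_def sm_zero_left[OF assms(1)] sm_one[OF assms(1)])
  then show "Emap sm id x J = x J" using sum_delta_supp[OF assms(2)] by simp
qed

definition scal :: "'r::comm_ring_1 \<Rightarrow> (nat set \<Rightarrow> 'r) \<Rightarrow> nat set \<Rightarrow> 'r" where
  "scal t g = (\<lambda>I. t ^ card I * g I)"

lemma Emap_scal:
  assumes "topsmod sm E0 E1" "finite {I. x I \<noteq> 0}"
  shows "Emap sm (scal t) x = (\<lambda>J. sm (t ^ card J) (x J))"
proof
  fix J
  have "Emap sm (scal t) x J = (\<Sum>I\<in>{I. x I \<noteq> 0}. if I = J then sm (t ^ card J) (x I) else 0)"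
    unfolding Emap_def
    by (rule sum.cong) (auto simp: scal_def theta_def sm_zero_left[OF assms(1)])
  also have "\<dots> = sm (t ^ card J) (x J)"
    using assms(2) by (simp add: sum.delta' sm_zero_right[OF assms(1)])
  finally show "Emap sm (scal t) x J = sm (t ^ card J) (x J)" .
qed

lemma theta_grass: "idx_ok mu I \<Longrightarrow> theta I \<in> grass mu"
  unfolding grass_def theta_def by auto

lemma gmorph_id: "gmorph (Fin 0) mu id"
proof -
  have "grass (Fin 0) \<subseteq> grass mu"
    unfolding grass_def by (cases mu) auto
  then show ?thesis unfolding gmorph_def by auto
qed

lemma gmorph_geps: "gmorph mu (Fin 0) geps"
proof -
  have mul: "geps (gmul g h) = gmul (geps g) (geps h)" for g h :: "nat set \<Rightarrow> 'r::comm_ring_1"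
  proof
    fix K :: "nat set"
    show "geps (gmul g h) K = gmul (geps g) (geps h) K"
    proof (cases "K = {}")
      case True
      then show ?thesis by (simp add: geps_def gmul_def gsign_def)
    next
      case False
      show ?thesis
      proof (cases "finite K")
        case True
        have "(\<Sum>I\<in>Pow K. gsign I (K - I) * geps g I * geps h (K - I)) = 0"
          by (rule sum.neutral) (use False in \<open>auto simp: geps_def\<close>)
        then show ?thesis using False True by (simp add: geps_def gmul_def)
      qed (use False in \<open>simp add: geps_def gmul_def\<close>)
    qed
  qed
  show ?thesis unfolding gmorph_def
    using mul[unfolded geps_def] by (auto simp: grass_def geps_def gone_def is_even_def is_odd_def)
qed

lemma gmorph_scal: fixes t :: "'r::comm_ring_1" shows "gmorph mu mu (scal t)"
proof -
  have mul: "scal t (gmul g h) = gmul (scal t g) (scal t h)" for g h :: "nat set \<Rightarrow> 'r::comm_ring_1"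
  proof
    fix K :: "nat set"
    show "scal t (gmul g h) K = gmul (scal t g) (scal t h) K"
    proof (cases "finite K")
      case True
      have "scal t (gmul g h) K = (\<Sum>I\<in>Pow K. t ^ card K * (gsign I (K - I) * g I * h (K - I)))"
        using True by (simp add: scal_def gmul_def sum_distrib_left)
      also have "\<dots> = (\<Sum>I\<in>Pow K. gsign I (K - I) * (t ^ card I * g I) * (t ^ card (K - I) * h (K - I)))"
      proof (rule sum.cong)
        fix I assume "I \<in> Pow K"
        hence "card K = card I + card (K - I)"
          using True by (metis PowD card_Diff_subset card_mono le_add_diff_inverse finite_subset)
        then show "t ^ card K * (gsign I (K - I) * g I * h (K - I)) = gsign I (K - I) * (t ^ card I * g I) * (t ^ card (K - I) * h (K - I))"
          by (simp add: power_add algebra_simps)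
      qed simp
      also have "\<dots> = gmul (scal t g) (scal t h) K"
        using True by (simp add: scal_def gmul_def)
      finally show ?thesis .
    qed (simp add: scal_def gmul_def)
  qed
  show ?thesis unfolding gmorph_def
    using mul[unfolded scal_def] by (auto simp: grass_def scal_def gone_def is_even_def is_odd_def algebra_simps)
      (force, metis (mono_tags, lifting) finite_subset mem_Collect_eq mult_zero_left subsetI)
qed


lemma idx_ok_finite: "idx_ok mu I \<Longrightarrow> finite I"
  by (cases mu) (auto intro: finite_subset)

lemma idx_ok_subset: "idx_ok mu I \<Longrightarrow> J \<subseteq> I \<Longrightarrow> idx_ok mu J"
  by (cases mu) (auto intro: finite_subset)

lemma gmul_theta_single:
  fixes i :: nat
  assumes "i \<notin> J" "finite J"
  shows "gmul (theta {i}) (theta J) = (\<lambda>K. gsign {i} J * (theta (insert i J) K :: 'r::comm_ring_1))"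
proof
  fix K :: "nat set"
  show "gmul (theta {i}) (theta J) K = gsign {i} J * (theta (insert i J) K :: 'r)"
  proof (cases "finite K")
    case True
    have "gmul (theta {i}) (theta J) K = (\<Sum>I\<in>Pow K. if {i} = I then gsign {i} (K - {i}) * (theta J (K - {i}) :: 'r) else 0)"
      unfolding gmul_def using True by (simp only: if_True) (intro sum.cong, auto simp: theta_def)
    also have "\<dots> = (if {i} \<in> Pow K then gsign {i} (K - {i}) * theta J (K - {i}) else 0)"
      using True by (simp add: sum.delta)
    also have "\<dots> = gsign {i} J * theta (insert i J) K"
      using assms by (auto simp: theta_def)
    finally show ?thesis .
  next
    case False
    then have "K \<noteq> insert i J" using assms by auto
    then show ?thesis using False by (simp add: gmul_def theta_def)
  qed
qed

lemma gsign_sq: "gsign I J * gsign I J = (1::'r::comm_ring_1)"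
  unfolding gsign_def by (simp add: power_add[symmetric] mult_2[symmetric] power_mult)

lemma phi_theta_eps:
  fixes phi :: "(nat set \<Rightarrow> 'r::comm_ring_1) \<Rightarrow> nat set \<Rightarrow> 'r"
  assumes phi: "gmorph mu mu' phi" and I: "idx_ok mu I"
  shows "phi (theta I) {} = (if I = {} then 1 else 0)"
proof (cases "I = {}")
  case True
  have "theta {} = (gone :: nat set \<Rightarrow> 'r)" by (auto simp: theta_def gone_def)
  then show ?thesis using True phi by (simp add: gmorph_def gone_def)
next
  case False
  then obtain i where i: "i \<in> I" by auto
  define J where "J = I - {i}"
  have fI: "finite I" using I by (rule idx_ok_finite)
  have iJ: "i \<notin> J" "finite J" "insert i J = I" using fI i by (auto simp: J_def)
  define c :: 'r where "c = gsign {i} J"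
  have a_gr: "(theta {i} :: nat set \<Rightarrow> 'r) \<in> grass mu" by (rule theta_grass) (use I i idx_ok_subset in blast)
  have b_gr: "(theta J :: nat set \<Rightarrow> 'r) \<in> grass mu" by (rule theta_grass) (use I idx_ok_subset J_def in blast)
  have prod: "gmul (theta {i}) (theta J) = (\<lambda>K. c * (theta I K :: 'r))"
    using gmul_theta_single[OF iJ(1,2)] iJ(3) by (simp add: c_def)
  have thI: "theta I = (\<lambda>K. c * (gmul (theta {i}) (theta J) K :: 'r))"
    unfolding prod by (simp add: c_def mult.assoc[symmetric] gsign_sq del: mult.assoc)
  then have "phi (theta I) = (\<lambda>K. c * phi (gmul (theta {i}) (theta J)) K)"
  proof -
    have "(\<lambda>K. c * (theta I K :: 'r)) \<in> grass mu"
      unfolding grass_def using I by (auto simp: theta_def intro: finite_subset[of _ "{I}"])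
    then have "(gmul (theta {i}) (theta J) :: nat set \<Rightarrow> 'r) \<in> grass mu" by (simp only: prod)
    then have "phi (\<lambda>K. c * gmul (theta {i}) (theta J) K) = (\<lambda>K. c * phi (gmul (theta {i}) (theta J)) K)"
      using phi unfolding gmorph_def by blast
    then show ?thesis by (subst thI)
  qed
  also have "\<dots> = (\<lambda>K. c * gmul (phi (theta {i})) (phi (theta J)) K)"
    using phi a_gr b_gr unfolding gmorph_def by metis
  finally have eq: "phi (theta I) {} = c * gmul (phi (theta {i})) (phi (theta J)) {}" by simp
  have "is_odd (theta {i} :: nat set \<Rightarrow> 'r)" by (auto simp: is_odd_def theta_def)
  then have "is_odd (phi (theta {i}))" using phi a_gr unfolding gmorph_def by blast
  then have "phi (theta {i}) {} = 0" by (simp add: is_odd_def)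
  then show ?thesis using eq False by (simp add: gmul_def)
qed


lemma phi_theta_parity:
  fixes phi :: "(nat set \<Rightarrow> 'r::comm_ring_1) \<Rightarrow> nat set \<Rightarrow> 'r"
  assumes phi: "gmorph mu mu' phi" and I: "idx_ok mu I" and nz: "phi (theta I) J \<noteq> 0"
  shows "even (card J) = even (card I)"
proof (cases "even (card I)")
  case True
  have "is_even (theta I :: nat set \<Rightarrow> 'r)" using True by (auto simp: is_even_def theta_def)
  then have "is_even (phi (theta I))" using phi theta_grass[OF I] unfolding gmorph_def by blast
  then show ?thesis using nz True by (auto simp: is_even_def)
next
  case False
  have "is_odd (theta I :: nat set \<Rightarrow> 'r)" using False by (auto simp: is_odd_def theta_def)
  then have "is_odd (phi (theta I))" using phi theta_grass[OF I] unfolding gmorph_def by blast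
  then show ?thesis using nz False by (auto simp: is_odd_def)
qed

lemma Eset_supp: "x \<in> Eset E0 E1 mu \<Longrightarrow> finite {I. x I \<noteq> 0}"
  by (simp add: Eset_def tens_set_def)

lemma Eset_idx: "x \<in> Eset E0 E1 mu \<Longrightarrow> x I \<noteq> 0 \<Longrightarrow> idx_ok mu I"
  by (simp add: Eset_def tens_set_def)

lemma Eset_val: "x \<in> Eset E0 E1 mu \<Longrightarrow> x I \<in> (if even (card I) then E0 else E1)"
  by (simp add: Eset_def)

lemma Emap_Eset:
  assumes sm: "topsmod sm E0 E1" and phi: "gmorph mu mu' phi" and x: "x \<in> Eset E0 E1 mu"
  shows "Emap sm phi x \<in> Eset E0 E1 mu'"
proof -
  define S where "S = {I. x I \<noteq> 0}"
  have fS: "finite S" using Eset_supp[OF x] by (simp add: S_def)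
  have nz: "\<exists>I\<in>S. phi (theta I) J \<noteq> 0" if "Emap sm phi x J \<noteq> 0" for J
  proof (rule ccontr)
    assume "\<not> ?thesis"
    then have "Emap sm phi x J = 0"
      unfolding Emap_def S_def[symmetric] by (intro sum.neutral) (auto simp: sm_zero_left[OF sm])
    with that show False by simp
  qed
  have gr: "phi (theta I) \<in> grass mu'" if "I \<in> S" for I
    using phi theta_grass[OF Eset_idx[OF x]] that unfolding gmorph_def S_def by blast
  have idx: "idx_ok mu' J" if "Emap sm phi x J \<noteq> 0" for J
    using nz[OF that] gr by (auto simp: grass_def)
  have fin: "finite {J. Emap sm phi x J \<noteq> 0}"
  proof (rule finite_subset)
    show "{J. Emap sm phi x J \<noteq> 0} \<subseteq> (\<Union>I\<in>S. {J. phi (theta I) J \<noteq> 0})" using nz by blast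
    show "finite (\<Union>I\<in>S. {J. phi (theta I) J \<noteq> 0})" using fS gr by (auto simp: grass_def)
  qed
  have E0: "0 \<in> E0" "\<forall>x\<in>E0. \<forall>y\<in>E0. x + y \<in> E0" "\<forall>a. \<forall>x\<in>E0. sm a x \<in> E0"
    using topsmod_E0[OF sm] by auto
  have E1: "0 \<in> E1" "\<forall>x\<in>E1. \<forall>y\<in>E1. x + y \<in> E1" "\<forall>a. \<forall>x\<in>E1. sm a x \<in> E1"
    using topsmod_E1[OF sm] by auto
  have par: "Emap sm phi x J \<in> (if even (card J) then E0 else E1)" for J
  proof -
    have trm: "sm (phi (theta I) J) (x I) \<in> (if even (card J) then E0 else E1)" if "I \<in> S" for I
    proof (cases "phi (theta I) J = 0")
      case True
      then show ?thesis using E0 E1 by (simp add: sm_zero_left[OF sm])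
    next
      case False
      then have "even (card J) = even (card I)"
        using phi_theta_parity[OF phi Eset_idx[OF x]] that S_def by blast
      then show ?thesis using Eset_val[OF x, of I] E0 E1 by auto
    qed
    show ?thesis unfolding Emap_def S_def[symmetric]
      by (rule sum_closed) (use trm E0 E1 in auto)
  qed
  show ?thesis unfolding Eset_def tens_set_def using idx fin par by auto
qed

lemma Emap_eps:
  assumes sm: "topsmod sm E0 E1" and phi: "gmorph mu mu' phi" and x: "x \<in> Eset E0 E1 mu"
  shows "Emap sm geps (Emap sm phi x) = Emap sm geps x"
proof -
  have f1: "finite {I. Emap sm phi x I \<noteq> 0}" using Emap_Eset[OF sm phi x] by (rule Eset_supp)
  have "Emap sm phi x {} = (\<Sum>I\<in>{I. x I \<noteq> 0}. if I = {} then x I else 0)"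
    unfolding Emap_def
    by (intro sum.cong refl) (auto simp: phi_theta_eps[OF phi Eset_idx[OF x]] sm_zero_left[OF sm] sm_one[OF sm])
  also have "\<dots> = x {}" by (rule sum_delta_supp[OF Eset_supp[OF x]])
  finally have e: "Emap sm phi x {} = x {}" .
  show ?thesis by (simp only: Emap_geps[OF sm f1] Emap_geps[OF sm Eset_supp[OF x]] e)
qed


lemma topspace_ptop: "topspace (ptop N) = {f. \<forall>I. \<not> I \<subseteq> {..<N} \<longrightarrow> f I = 0}"
  unfolding ptop_def by (auto simp: topspace_product_topology PiE_def Pi_def split: if_splits)

lemma topspace_ptop_tens: "topspace (ptop N) \<subseteq> tens_set Inf"
proof
  fix f assume "f \<in> topspace (ptop N)"
  then have z: "\<And>I. f I \<noteq> 0 \<Longrightarrow> I \<subseteq> {..<N}" by (auto simp: topspace_ptop)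
  have "{I. f I \<noteq> 0} \<subseteq> Pow {..<N}" using z by auto
  then have "finite {I. f I \<noteq> 0}" by (rule finite_subset) simp
  then show "f \<in> tens_set Inf" using z by (auto simp: tens_set_def intro: finite_subset)
qed

lemma istopology_Inf:
  "istopology (\<lambda>U. U \<subseteq> tens_set Inf \<and> (\<forall>N. openin (ptop N) (U \<inter> topspace (ptop N))))"
  unfolding istopology_def
proof (rule conjI; intro allI impI)
  fix S T :: "(nat set \<Rightarrow> 'a) set"
  assume S: "S \<subseteq> tens_set Inf \<and> (\<forall>N. openin (ptop N) (S \<inter> topspace (ptop N)))"
    and T: "T \<subseteq> tens_set Inf \<and> (\<forall>N. openin (ptop N) (T \<inter> topspace (ptop N)))"
  show "S \<inter> T \<subseteq> tens_set Inf \<and> (\<forall>N. openin (ptop N) (S \<inter> T \<inter> topspace (ptop N)))"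
  proof (intro conjI allI)
    fix N
    have "S \<inter> T \<inter> topspace (ptop N) = (S \<inter> topspace (ptop N)) \<inter> (T \<inter> topspace (ptop N))" by auto
    then show "openin (ptop N) (S \<inter> T \<inter> topspace (ptop N))" using S T by (simp add: openin_Int)
  qed (use S in auto)
next
  fix K :: "(nat set \<Rightarrow> 'a) set set"
  assume K: "\<forall>U\<in>K. U \<subseteq> tens_set Inf \<and> (\<forall>N. openin (ptop N) (U \<inter> topspace (ptop N)))"
  show "\<Union>K \<subseteq> tens_set Inf \<and> (\<forall>N. openin (ptop N) (\<Union>K \<inter> topspace (ptop N)))"
  proof (intro conjI allI)
    fix N
    have "\<Union>K \<inter> topspace (ptop N) = \<Union>((\<lambda>U. U \<inter> topspace (ptop N)) ` K)" by auto
    moreover have "openin (ptop N) (\<Union>((\<lambda>U. U \<inter> topspace (ptop N)) ` K))"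
      using K by (intro openin_Union) auto
    ultimately show "openin (ptop N) (\<Union>K \<inter> topspace (ptop N))" by simp
  qed (use K in auto)
qed

lemma openin_tens_Inf:
  "openin (tens_top Inf) U \<longleftrightarrow> U \<subseteq> tens_set Inf \<and> (\<forall>N. openin (ptop N) (U \<inter> topspace (ptop N)))"
  unfolding tens_top_def gobj.case topology_inverse'[OF istopology_Inf] ..

lemma cont_pow: "continuous_on UNIV (\<lambda>t::'r::{comm_ring_1,topological_semigroup_mult}. t ^ n)"
  by (induction n) (auto intro!: continuous_intros)

lemma cont_sm_pow:
  assumes sm: "topsmod sm E0 E1"
  shows "continuous_on UNIV (\<lambda>t. sm (t ^ n) e)"
proof -
  have "continuous_on UNIV ((\<lambda>p. sm (fst p) (snd p)) \<circ> (\<lambda>t. (t ^ n, e)))"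
    by (rule continuous_on_compose) (auto intro!: continuous_intros cont_pow topsmod_cont[OF sm] intro: continuous_on_subset)
  then show ?thesis by (simp add: o_def)
qed

lemma cont_scal_map:
  assumes sm: "topsmod sm E0 E1" and z: "\<And>J. \<not> J \<subseteq> {..<N} \<Longrightarrow> x J = 0"
  shows "continuous_map euclidean (ptop N) (\<lambda>t. \<lambda>J. sm (t ^ card J) (x J))"
  unfolding ptop_def continuous_map_componentwise_UNIV
proof
  fix J :: "nat set"
  show "continuous_map euclidean (if J \<subseteq> {..<N} then euclidean else top_of_set {0}) (\<lambda>t. sm (t ^ card J) (x J))"
  proof (cases "J \<subseteq> {..<N}")
    case True
    then show ?thesis using cont_sm_pow[OF sm] by simp
  next
    case False
    then show ?thesis using z[OF False] by (simp add: sm_zero_right[OF sm])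
  qed
qed

lemma cont_c: "continuous_map euclidean (ptop 0) (\<lambda>e::'e::{zero,topological_space}. \<lambda>J::nat set. if J = {} then e else 0)"
  unfolding ptop_def continuous_map_componentwise_UNIV
proof
  fix J :: "nat set"
  show "continuous_map euclidean (if J \<subseteq> {..<0} then euclidean else top_of_set {0}) (\<lambda>e::'e. if J = {} then e else 0)"
    by (cases "J = {}") auto
qed

lemma cont_eval: "continuous_map (ptop N) euclidean (\<lambda>x::nat set \<Rightarrow> 'e::{zero,topological_space}. x {})"
proof -
  have "continuous_map (ptop N) ((\<lambda>I. if I \<subseteq> {..<N} then euclidean else top_of_set {0}) {}) (\<lambda>x::nat set \<Rightarrow> 'e. x {})"
    unfolding ptop_def by (rule continuous_map_product_projection) simp
  then show ?thesis by simp
qed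


lemma key:
  fixes sm :: "'r::{comm_ring_1, topological_semigroup_mult, topological_group_add, t2_space}
               \<Rightarrow> 'e::{ab_group_add, topological_group_add, t2_space} \<Rightarrow> 'e"
  assumes dense: "top_ring_dense_units TYPE('r)" and sm: "topsmod sm E0 E1"
    and UU: "open_subfunctor sm E0 E1 UU"
  shows "UU mu = EV sm E0 E1 (UU (Fin 0)) mu"
proof -
  have sub: "\<And>mu. UU mu \<subseteq> Eset E0 E1 mu"
    and funct: "\<And>mu mu' phi x. gmorph mu mu' phi \<Longrightarrow> x \<in> UU mu \<Longrightarrow> Emap sm phi x \<in> UU mu'"
    and op: "\<And>mu. openin (Etop E0 E1 mu) (UU mu)"
    using UU unfolding open_subfunctor_def subfunctor_def by blast+
  show ?thesis
  proof
    show "UU mu \<subseteq> EV sm E0 E1 (UU (Fin 0)) mu"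
      using sub funct[OF gmorph_geps] by (auto simp: EV_def)
  next
    show "EV sm E0 E1 (UU (Fin 0)) mu \<subseteq> UU mu"
    proof
      fix x assume "x \<in> EV sm E0 E1 (UU (Fin 0)) mu"
      then have x: "x \<in> Eset E0 E1 mu" and y0: "Emap sm geps x \<in> UU (Fin 0)" by (auto simp: EV_def)
      define y where "y = Emap sm geps x"
      have yfin: "finite {I. y I \<noteq> 0}" using sub y0 Eset_supp unfolding y_def by blast
      have "Emap sm id y \<in> UU mu" using funct[OF gmorph_id] y0 y_def by blast
      then have yU: "y \<in> UU mu" using Emap_id[OF sm yfin] by simp
      define st where "st t = Emap sm (scal t) x" for t :: 'r
      have st_eq: "st t = (\<lambda>J. sm (t ^ card J) (x J))" for t
        unfolding st_def by (rule Emap_scal[OF sm Eset_supp[OF x]])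
      have st_E: "st t \<in> Eset E0 E1 mu" for t
        unfolding st_def by (rule Emap_Eset[OF sm gmorph_scal x])
      have "st 0 = y"
      proof
        fix J :: "nat set"
        show "st 0 J = y J"
        proof (cases "J = {}")
          case True
          then show ?thesis by (simp add: st_eq y_def Emap_geps[OF sm Eset_supp[OF x]] sm_one[OF sm])
        next
          case False
          have "sm (0 ^ card J) (x J) = 0"
          proof (cases "x J = 0")
            case True then show ?thesis by (simp add: sm_zero_right[OF sm])
          next
            case False
            then have "finite J" using Eset_idx[OF x] idx_ok_finite by blast
            then have "card J \<noteq> 0" using \<open>J \<noteq> {}\<close> by simp
            then have "(0::'r) ^ card J = 0" by (simp add: zero_power)
            then show ?thesis by (simp add: sm_zero_left[OF sm])
          qed
          then show ?thesis using False by (simp add: st_eq y_def Emap_geps[OF sm Eset_supp[OF x]])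
        qed
      qed
      obtain T where T: "openin (tens_top mu) T" and UT: "UU mu = T \<inter> Eset E0 E1 mu"
        using op[of mu] unfolding Etop_def openin_subtopology by blast
      obtain N where z: "\<And>J. \<not> J \<subseteq> {..<N} \<Longrightarrow> x J = 0"
        and TN: "openin (ptop N) (T \<inter> topspace (ptop N))"
      proof (cases mu)
        case (Fin n)
        have "T \<subseteq> topspace (ptop n)" using T openin_subset Fin by (fastforce simp: tens_top_def)
        then have "T \<inter> topspace (ptop n) = T" by blast
        then have "openin (ptop n) (T \<inter> topspace (ptop n))" using T Fin by (simp add: tens_top_def)
        moreover have "\<And>J. \<not> J \<subseteq> {..<n} \<Longrightarrow> x J = 0" using Eset_idx[OF x] Fin by fastforce
        ultimately show ?thesis using that by blast
      next
        case Inf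
        have fS: "finite {I. x I \<noteq> 0}" by (rule Eset_supp[OF x])
        have "finite (\<Union>{I. x I \<noteq> 0})"
          using fS Eset_idx[OF x] Inf by (auto)
        then obtain k where k: "\<Union>{I. x I \<noteq> 0} \<subseteq> {..<k}" using finite_nat_bounded by blast
        have "\<And>J. \<not> J \<subseteq> {..<k} \<Longrightarrow> x J = 0" using k by blast
        moreover have "openin (ptop k) (T \<inter> topspace (ptop k))" using T Inf openin_tens_Inf by blast
        ultimately show ?thesis using that by blast
      qed
      define A where "A = {t. st t \<in> T}"
      have "openin euclidean {t \<in> topspace euclidean. st t \<in> T \<inter> topspace (ptop N)}"
        by (rule openin_continuous_map_preimage[OF _ TN])
           (unfold st_eq, rule cont_scal_map[OF sm z])
      moreover have "st t \<in> topspace (ptop N)" for t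
        using z by (simp add: st_eq topspace_ptop sm_zero_right[OF sm])
      ultimately have "open A" unfolding A_def by simp
      moreover have "0 \<in> A" using yU UT \<open>st 0 = y\<close> by (simp add: A_def)
      ultimately have "A \<inter> {u::'r. \<exists>v. u * v = 1} \<noteq> {}"
        using open_Int_closure_eq_empty[of A "{u::'r. \<exists>v. u * v = 1}"] dense
        by (auto simp: top_ring_dense_units_def)
      then obtain t v where tA: "t \<in> A" and tv: "t * v = 1" by blast
      have stU: "st t \<in> UU mu" using tA st_E UT by (simp add: A_def)
      have "Emap sm (scal v) (st t) \<in> UU mu" by (rule funct[OF gmorph_scal stU])
      moreover have "Emap sm (scal v) (st t) = x"
      proof -
        have "Emap sm (scal v) (st t) = (\<lambda>J. sm (v ^ card J) (st t J))"
          by (rule Emap_scal[OF sm Eset_supp[OF st_E]])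
        also have "\<dots> = (\<lambda>J. sm ((v * t) ^ card J) (x J))"
          by (simp add: st_eq topsmod_mult[OF sm, symmetric] power_mult_distrib)
        also have "\<dots> = x" using tv by (simp add: mult.commute sm_one[OF sm])
        finally show ?thesis .
      qed
      ultimately show "x \<in> UU mu" by simp
    qed
  qed
qed


lemma EV_open:
  fixes sm :: "'r::{comm_ring_1, topological_semigroup_mult, topological_group_add, t2_space}
               \<Rightarrow> 'e::{ab_group_add, topological_group_add, t2_space} \<Rightarrow> 'e"
  assumes sm: "topsmod sm E0 E1" and W: "openin (Etop E0 E1 (Fin 0)) W"
  shows "openin (Etop E0 E1 mu) (EV sm E0 E1 W mu)"
proof -
  obtain W0 where W0: "openin (ptop 0) W0" and WW: "W = W0 \<inter> Eset E0 E1 (Fin 0)"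
    using W unfolding Etop_def openin_subtopology by (auto simp: tens_top_def)
  define c where "c e = (\<lambda>J::nat set. if J = {} then e else (0::'e))" for e
  define W' where "W' = {e. c e \<in> W0}"
  have "openin euclidean {e \<in> topspace euclidean. c e \<in> W0}"
    by (rule openin_continuous_map_preimage[OF _ W0]) (unfold c_def, rule cont_c)
  then have oW': "openin euclidean W'" by (simp add: W'_def)
  have E0: "0 \<in> E0" "0 \<in> E1" using topsmod_E0[OF sm] topsmod_E1[OF sm] by auto
  have mem: "x \<in> EV sm E0 E1 W mu \<longleftrightarrow> x \<in> Eset E0 E1 mu \<and> x {} \<in> W'" for x
  proof (cases "x \<in> Eset E0 E1 mu")
    case True
    have "x {} \<in> E0" using Eset_val[OF True, of "{}"] by simp
    then have "c (x {}) \<in> Eset E0 E1 (Fin 0)"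
      using E0 by (auto simp: c_def Eset_def tens_set_def intro: finite_subset[of _ "{{}}"])
    moreover have "Emap sm geps x = c (x {})"
      unfolding c_def by (rule Emap_geps[OF sm Eset_supp[OF True]])
    ultimately show ?thesis using True by (auto simp: EV_def WW W'_def)
  qed (simp add: EV_def)
  define T where "T = {x. x \<in> (case mu of Fin n \<Rightarrow> topspace (ptop n) | Inf \<Rightarrow> tens_set Inf) \<and> x {} \<in> W'}"
  have carrier: "Eset E0 E1 mu \<subseteq> (case mu of Fin n \<Rightarrow> topspace (ptop n) | Inf \<Rightarrow> tens_set Inf)"
  proof (cases mu)
    case (Fin n)
    then show ?thesis using Eset_idx by (fastforce simp: topspace_ptop)
  qed (auto simp: Eset_def)
  have eq: "EV sm E0 E1 W mu = T \<inter> Eset E0 E1 mu"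
    using carrier by (auto simp: mem T_def)
  have oT: "openin (tens_top mu) T"
  proof (cases mu)
    case (Fin n)
    have "openin (ptop n) {x \<in> topspace (ptop n). x {} \<in> W'}"
      by (rule openin_continuous_map_preimage[OF cont_eval oW'])
    then show ?thesis using Fin by (simp add: T_def tens_top_def)
  next
    case Inf
    have "openin (ptop N) (T \<inter> topspace (ptop N))" for N
    proof -
      have "T \<inter> topspace (ptop N) = {x \<in> topspace (ptop N). x {} \<in> W'}"
        using topspace_ptop_tens Inf by (auto simp: T_def)
      then show ?thesis using openin_continuous_map_preimage[OF cont_eval oW'] by simp
    qed
    then show ?thesis using Inf openin_tens_Inf by (auto simp: T_def)
  qed
  show ?thesis unfolding Etop_def openin_subtopology using eq oT by blast
qed

lemma EV_subfunctor:
  fixes sm :: "'r::{comm_ring_1, topological_semigroup_mult, topological_group_add, t2_space}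
               \<Rightarrow> 'e::{ab_group_add, topological_group_add, t2_space} \<Rightarrow> 'e"
  assumes sm: "topsmod sm E0 E1"
  shows "subfunctor sm E0 E1 (EV sm E0 E1 V)"
  unfolding subfunctor_def
proof (intro conjI allI impI)
  fix mu show "EV sm E0 E1 V mu \<subseteq> Eset E0 E1 mu" by (auto simp: EV_def)
next
  fix mu mu' and phi :: "(nat set \<Rightarrow> 'r) \<Rightarrow> nat set \<Rightarrow> 'r" assume phi: "gmorph mu mu' phi"
  show "Emap sm phi ` EV sm E0 E1 V mu \<subseteq> EV sm E0 E1 V mu'"
    using Emap_Eset[OF sm phi] Emap_eps[OF sm phi] by (auto simp: EV_def)
qed


lemma img:
  fixes sm :: "'r::{comm_ring_1, topological_semigroup_mult, topological_group_add, t2_space}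
               \<Rightarrow> 'e::{ab_group_add, topological_group_add, t2_space} \<Rightarrow> 'e"
  assumes sm: "topsmod sm E0 E1" and UU: "open_subfunctor sm E0 E1 UU"
  shows "Emap sm geps ` UU lam = UU (Fin 0)"
proof -
  have sub: "\<And>mu. UU mu \<subseteq> Eset E0 E1 mu"
    and funct: "\<And>mu mu' phi x. gmorph mu mu' phi \<Longrightarrow> x \<in> UU mu \<Longrightarrow> Emap sm phi x \<in> UU mu'"
    using UU unfolding open_subfunctor_def subfunctor_def by blast+
  show ?thesis
  proof
    show "Emap sm geps ` UU lam \<subseteq> UU (Fin 0)" using funct[OF gmorph_geps] by blast
  next
    show "UU (Fin 0) \<subseteq> Emap sm geps ` UU lam"
    proof
      fix y assume y: "y \<in> UU (Fin 0)"
      then have yE: "y \<in> Eset E0 E1 (Fin 0)" using sub by blast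
      have "Emap sm id y \<in> UU lam" using funct[OF gmorph_id y] .
      then have yl: "y \<in> UU lam" using Emap_id[OF sm Eset_supp[OF yE]] by simp
      have "Emap sm geps y = y"
      proof
        fix J
        show "Emap sm geps y J = y J"
          using Emap_geps[OF sm Eset_supp[OF yE]] Eset_idx[OF yE, of J] by auto
      qed
      then show "y \<in> Emap sm geps ` UU lam" using yl by (metis image_eqI)
    qed
  qed
qed

theorem proposition2p8:
  fixes sm :: "'r::{comm_ring_1, topological_semigroup_mult, topological_group_add, t2_space}
               \<Rightarrow> 'e::{ab_group_add, topological_group_add, t2_space} \<Rightarrow> 'e"
    and E0 E1 :: "'e set"
    and lam :: gobj
    and U :: "(nat set \<Rightarrow> 'e) set"
  assumes "top_ring_dense_units TYPE('r)"
    and "topsmod sm E0 E1"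
    and "U \<subseteq> Eset E0 E1 lam"
  shows "((\<exists>UU. open_subfunctor sm E0 E1 UU \<and> UU lam = U) \<longleftrightarrow> openin (dewitt sm E0 E1 lam) U)
       \<and> (\<forall>UU UU'. open_subfunctor sm E0 E1 UU \<and> UU lam = U \<and>
                   open_subfunctor sm E0 E1 UU' \<and> UU' lam = U \<longrightarrow> UU = UU')
       \<and> (\<forall>UU. open_subfunctor sm E0 E1 UU \<and> UU lam = U \<longrightarrow>
              Emap sm geps ` U = UU (Fin 0) \<and> UU = EV sm E0 E1 (Emap sm geps ` U))"
proof -
  note dense = assms(1) and sm = assms(2)
  have C: "Emap sm geps ` U = UU (Fin 0) \<and> UU = EV sm E0 E1 (Emap sm geps ` U)"
    if UU: "open_subfunctor sm E0 E1 UU" and Ul: "UU lam = U" for UU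
  proof
    show im: "Emap sm geps ` U = UU (Fin 0)" using img[OF sm UU, of lam] Ul by simp
    show "UU = EV sm E0 E1 (Emap sm geps ` U)"
      unfolding im using key[OF dense sm UU] by blast
  qed
  have A: "(\<exists>UU. open_subfunctor sm E0 E1 UU \<and> UU lam = U) \<longleftrightarrow> openin (dewitt sm E0 E1 lam) U"
  proof
    assume "\<exists>UU. open_subfunctor sm E0 E1 UU \<and> UU lam = U"
    then obtain UU where UU: "open_subfunctor sm E0 E1 UU" and Ul: "UU lam = U" by blast
    have "openin (Etop E0 E1 (Fin 0)) (UU (Fin 0))" using UU unfolding open_subfunctor_def by blast
    moreover have "U = Emap sm geps -` UU (Fin 0) \<inter> Eset E0 E1 lam"
      using key[OF dense sm UU, of lam] Ul by (auto simp: EV_def)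
    ultimately show "openin (dewitt sm E0 E1 lam) U"
      unfolding dewitt_def openin_pullback_topology by blast
  next
    assume "openin (dewitt sm E0 E1 lam) U"
    then obtain W where W: "openin (Etop E0 E1 (Fin 0)) W" and UW: "U = Emap sm geps -` W \<inter> Eset E0 E1 lam"
      unfolding dewitt_def openin_pullback_topology by blast
    have "open_subfunctor sm E0 E1 (EV sm E0 E1 W)"
      unfolding open_subfunctor_def using EV_subfunctor[OF sm] EV_open[OF sm W] by blast
    moreover have "EV sm E0 E1 W lam = U" using UW by (auto simp: EV_def)
    ultimately show "\<exists>UU. open_subfunctor sm E0 E1 UU \<and> UU lam = U" by blast
  qed
  show ?thesis using A C by metis
qed

end
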